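(* Let $\mathcal{G}=(\mathcal{V},\mathcal{E})$ be a connected undirected graph (a transmission network) with nodes $\mathcal{V}=\{1,\dots,N\}$ and edges $e_1,\dots,e_L$, $\mathcal{L}=\{1,\dots,L\}$, each edge given a fixed orientation, with incidence matrix $\mathbf{Q}=(q_{il})\in\mathbb{R}^{N\times L}$ ($q_{il}=1$ if $i$ is the initial node of $e_l$, $-1$ if it is the terminal node, $0$ otherwise). For each node $i\in\mathcal{V}$ let $M_i>0$, $D_i>0$ and consider the linear node plant $$H^\delta_{pi}:\ \dot x^\delta_{pi}=\begin{bmatrix}-D_i/M_i&0\\1&0\end{bmatrix}x^\delta_{pi}+\begin{bmatrix}1/M_i\\0\end{bmatrix}u^\delta_{pi},\qquad y^\delta_{pi}=\begin{bmatrix}0&1\end{bmatrix}x^\delta_{pi},$$ with $x^\delta_{pi}\in\mathbb{R}^2$, $u^\delta_{pi}\in\mathbb{R}$. For each edge $l\in\mathcal{L}$ let $\tau^\delta_l>0$ and $K^\delta_{l[2]}>K^\delta_{l[1]}>0$ and consider the edge controller $$H^\delta_{cl}:\ \dot x^\delta_{cl}=-\tfrac{1}{\tau^\delta_l}x^\delta_{cl}+\tfrac{K^\delta_{l[1]}}{\tau^\delta_l}u^\delta_{cl},\qquad y^\delta_{cl}=x^\delta_{cl}-K^\delta_{l[2]}u^\delta_{cl},$$ with $x^\delta_{cl},u^\delta_{cl}\in\mathbb{R}$. Consider the positive feedback interconnection in which, for each edge $e_l$ with initial node $i$ and terminal node $j$, $u^\delta_{cl}=y^\delta_{pi}-y^\delta_{pj}$,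 and for each node $i$, $u^\delta_{pi}=\sum_{l=1}^L q_{il}y^\delta_{cl}$. Then this closed-loop system achieves output consensus: there exists an open domain $\mathcal{D}_c$ in the joint state space containing the origin such that $\lim_{t\to\infty}|y^\delta_{pi}(t)-y^\delta_{pj}(t)|=0$ for all $i,j\in\mathcal{V}$ and all initial conditions in $\mathcal{D}_c$.
   Context: In the application, $x^\delta_{pi}=[\dot{\tilde\delta}_i,\tilde\delta_i]^\top$ where $\tilde\delta_i$ is the deviation of the voltage angle of generator bus $i$ from equilibrium, $M_i$ is the machine inertia constant and $D_i$ the machine damping constant. *)

theory Defs
  imports "HOL-Analysis.Analysis"
begin

text \<open>Nodes are the elements of a finite type 'v, edges the elements of a finite type 'e.
  Edge l is oriented from src l (initial node) to dst l (terminal node).\<close>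

definition incidence :: "('e \<Rightarrow> 'v) \<Rightarrow> ('e \<Rightarrow> 'v) \<Rightarrow> 'v \<Rightarrow> 'e \<Rightarrow> real" where
  "incidence src dst i l = (if src l = i then 1 else if dst l = i then -1 else 0)"

definition graph_adj :: "('e \<Rightarrow> 'v) \<Rightarrow> ('e \<Rightarrow> 'v) \<Rightarrow> 'v \<Rightarrow> 'v \<Rightarrow> bool" where
  "graph_adj src dst i j = (\<exists>l. (src l = i \<and> dst l = j) \<or> (src l = j \<and> dst l = i))"

definition graph_connected :: "('e \<Rightarrow> 'v) \<Rightarrow> ('e \<Rightarrow> 'v) \<Rightarrow> bool" where
  "graph_connected src dst = (\<forall>i j. (graph_adj src dst)\<^sup>*\<^sup>* i j)"

definition simple_graph :: "('e \<Rightarrow> 'v) \<Rightarrow> ('e \<Rightarrow> 'v) \<Rightarrow> bool" where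
  "simple_graph src dst =
     ((\<forall>l. src l \<noteq> dst l) \<and>
      (\<forall>l l'. {src l, dst l} = {src l', dst l'} \<longrightarrow> l = l'))"

text \<open>Closed-loop trajectory on [0,\<infinity>): node states x_pi = (w i, d i) with w = d', the
  plant output y_pi = d i; edge controller states c l.  Interconnection:
  u_cl = y_p(src l) - y_p(dst l), u_pi = sum_l q_il y_cl.\<close>
definition closed_loop_solution ::
  "('v::finite \<Rightarrow> real) \<Rightarrow> ('v \<Rightarrow> real) \<Rightarrow> ('e::finite \<Rightarrow> real) \<Rightarrow> ('e \<Rightarrow> real) \<Rightarrow> ('e \<Rightarrow> real)
   \<Rightarrow> ('e \<Rightarrow> 'v) \<Rightarrow> ('e \<Rightarrow> 'v)
   \<Rightarrow> (real \<Rightarrow> 'v \<Rightarrow> real) \<Rightarrow> (real \<Rightarrow> 'v \<Rightarrow> real) \<Rightarrow> (real \<Rightarrow> 'e \<Rightarrow> real) \<Rightarrow> bool" where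
  "closed_loop_solution M Dmp tau K1 K2 src dst w d c =
     (\<forall>t\<ge>0.
        let yp = d t;
            uc = (\<lambda>l. yp (src l) - yp (dst l));
            yc = (\<lambda>l. c t l - K2 l * uc l);
            up = (\<lambda>i. \<Sum>l\<in>UNIV. incidence src dst i l * yc l)
        in (\<forall>i. ((\<lambda>s. w s i) has_real_derivative
                   (- (Dmp i / M i) * w t i + 0 * d t i + (1 / M i) * up i)) (at t within {0..}))
         \<and> (\<forall>i. ((\<lambda>s. d s i) has_real_derivative (1 * w t i + 0 * d t i)) (at t within {0..}))
         \<and> (\<forall>l. ((\<lambda>s. c s l) has_real_derivative
                   (- (1 / tau l) * c t l + (K1 l / tau l) * uc l)) (at t within {0..})))"

end

theory Submission
  imports Defs
begin


lemma ratio_bound: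
  fixes f g :: "'a::euclidean_space \<Rightarrow> real"
  assumes clS: "closed S" and coneS: "\<And>x s. x \<in> S \<Longrightarrow> s *\<^sub>R x \<in> S"
  and cf: "continuous_on S f" and cg: "continuous_on S g"
  and hf: "\<And>x s. f (s *\<^sub>R x) = s^2 * f x" and hg: "\<And>x s. g (s *\<^sub>R x) = s^2 * g x"
  and pos: "\<And>x. x \<in> S \<Longrightarrow> x \<noteq> 0 \<Longrightarrow> g x > 0"
  shows "\<exists>C. \<forall>x\<in>S. f x \<le> C * g x"
proof -
  define K where "K = S \<inter> sphere 0 1"
  have f0: "f 0 = 0" using hf[of 0 0] by simp
  have g0: "g 0 = 0" using hg[of 0 0] by simp
  have cK: "compact K" unfolding K_def
    by (metis Int_commute clS compact_Int_closed compact_sphere)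
  show ?thesis
  proof (cases "K = {}")
    case True
    have "x = 0" if "x \<in> S" for x
    proof (rule ccontr)
      assume "x \<noteq> 0"
      then have "(1/norm x) *\<^sub>R x \<in> K" using coneS[OF that] unfolding K_def by auto
      then show False using True by auto
    qed
    then show ?thesis using f0 g0 by (intro exI[of _ 0]) force
  next
    case False
    have gpos: "\<forall>u\<in>K. g u > 0" using pos unfolding K_def by (metis IntE mem_sphere_0 norm_zero zero_neq_one)
    have "continuous_on K (\<lambda>u. f u / g u)"
    proof (rule continuous_on_divide)
      show "continuous_on K f" "continuous_on K g" using cf cg unfolding K_def
        by (auto intro: continuous_on_subset)
      show "\<forall>x\<in>K. g x \<noteq> 0" using gpos by force
    qed
    from continuous_attains_sup[OF cK False this] obtain u0 where u0: "u0 \<in> K"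
      and mx: "\<forall>u\<in>K. f u / g u \<le> f u0 / g u0" by blast
    define C where "C = f u0 / g u0"
    have "f x \<le> C * g x" if "x \<in> S" for x
    proof (cases "x = 0")
      case True then show ?thesis using f0 g0 by simp
    next
      case False
      define u where "u = (1/norm x) *\<^sub>R x"
      have uK: "u \<in> K" using coneS[OF that] False unfolding K_def u_def by auto
      have xu: "x = norm x *\<^sub>R u" using False unfolding u_def by simp
      have "f u \<le> C * g u" using mx uK gpos unfolding C_def by (simp add: pos_divide_le_eq)
      then have "(norm x)^2 * f u \<le> (norm x)^2 * (C * g u)" by (simp add: mult_left_mono)
      then show ?thesis using hf[of "norm x" u] hg[of "norm x" u] xu by (metis mult.left_commute)
    qed
    then show ?thesis by blast
  qed
qed


locale clsys =
  fixes M Dmp :: "'v::finite \<Rightarrow> real" and tau K1 K2 :: "'e::finite \<Rightarrow> real"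
    and src dst :: "'e \<Rightarrow> 'v"
  assumes noloop: "\<And>l. src l \<noteq> dst l" and conn: "graph_connected src dst"
    and Mpos: "\<And>i. M i > 0" and Dpos: "\<And>i. Dmp i > 0"
    and taupos: "\<And>l. tau l > 0" and K1pos: "\<And>l. K1 l > 0" and K21: "\<And>l. K2 l > K1 l"
begin

definition "q i l = incidence src dst i l"
definition "kk l = K2 l - K1 l"
definition zf :: "('v \<Rightarrow> real) \<Rightarrow> 'e \<Rightarrow> real" where "zf x l = x (src l) - x (dst l)"
definition qs :: "('e \<Rightarrow> real) \<Rightarrow> 'v \<Rightarrow> real" where "qs a i = (\<Sum>l\<in>UNIV. q i l * a l)"
definition "Wq w = (\<Sum>i\<in>UNIV. M i * (w i)^2)"
definition "Zq d = (\<Sum>l\<in>UNIV. kk l * (zf d l)^2)"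
definition "Rq r = (\<Sum>l\<in>UNIV. (1 / K1 l) * (r l)^2)"
definition "Dis w r = (\<Sum>i\<in>UNIV. Dmp i * (w i)^2) + (\<Sum>l\<in>UNIV. (1 / (tau l * K1 l)) * (r l)^2)"
definition "pp d = qs (\<lambda>l. kk l * zf d l)"
definition "Pq d = (\<Sum>i\<in>UNIV. (pp d i)^2)"
definition "PMq d = (\<Sum>i\<in>UNIV. M i * (pp d i)^2)"
definition "Fq w r = (\<Sum>i\<in>UNIV. (1/2) * (qs r i - Dmp i * w i)^2) + (\<Sum>i\<in>UNIV. M i * w i * pp w i)"

lemma kkpos: "kk l > 0" using K21[of l] unfolding kk_def by simp

lemma inc_sum: "(\<Sum>i\<in>UNIV. q i l * x i) = zf x l"
proof -
  have "(\<Sum>i\<in>UNIV. q i l * x i) = (\<Sum>i\<in>UNIV. (if i = src l then x i else 0) + (if i = dst l then - x i else 0))"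
    by (rule sum.cong) (use noloop[of l] in \<open>auto simp: q_def incidence_def\<close>)
  also have "\<dots> = zf x l" by (simp add: sum.distrib zf_def)
  finally show ?thesis .
qed

lemma key: "(\<Sum>i\<in>UNIV. x i * qs a i) = (\<Sum>l\<in>UNIV. a l * zf x l)"
proof -
  have "(\<Sum>i\<in>UNIV. x i * qs a i) = (\<Sum>i\<in>UNIV. \<Sum>l\<in>UNIV. a l * (q i l * x i))"
    unfolding qs_def by (simp add: sum_distrib_left algebra_simps)
  also have "\<dots> = (\<Sum>l\<in>UNIV. \<Sum>i\<in>UNIV. a l * (q i l * x i))" by (rule sum.swap)
  also have "\<dots> = (\<Sum>l\<in>UNIV. a l * zf x l)" by (simp add: sum_distrib_left[symmetric] inc_sum)
  finally show ?thesis .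
qed

lemma zf_scale: "zf (\<lambda>i. s * x i) = (\<lambda>l. s * zf x l)" by (auto simp: zf_def algebra_simps)
lemma qs_scale: "qs (\<lambda>l. s * a l) = (\<lambda>i. s * qs a i)" by (auto simp: qs_def sum_distrib_left algebra_simps)
lemma pp_scale: "pp (\<lambda>i. s * x i) = (\<lambda>i. s * pp x i)"
  unfolding pp_def zf_scale using qs_scale[of s "\<lambda>l. kk l * zf x l"] by (simp add: algebra_simps)

lemma zf_shift: "zf (\<lambda>i. x i - a) = zf x" by (auto simp: zf_def)
lemma qs_diff: "qs (\<lambda>l. a l - b l) i = qs a i - qs b i" by (simp add: qs_def algebra_simps sum_subtractf)

lemma Fq_scale: "Fq (\<lambda>i. s * w i) (\<lambda>l. s * r l) = s^2 * Fq w r"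
proof -
  have a: "(1/2) * (s * qs r i - Dmp i * (s * w i))^2 = s^2 * ((1/2) * (qs r i - Dmp i * w i)^2)" for i
    by (simp add: power2_eq_square algebra_simps)
  have b: "M i * (s * w i) * (s * pp w i) = s^2 * (M i * w i * pp w i)" for i
    by (simp add: power2_eq_square algebra_simps)
  show ?thesis unfolding Fq_def qs_scale pp_scale a b by (simp add: sum_distrib_left distrib_left)
qed
lemma Dis_scale: "Dis (\<lambda>i. s * w i) (\<lambda>l. s * r l) = s^2 * Dis w r"
  unfolding Dis_def by (simp add: sum_distrib_left distrib_left power2_eq_square algebra_simps)
lemma WR_scale: "Wq (\<lambda>i. s * w i) + Rq (\<lambda>l. s * r l) = s^2 * (Wq w + Rq r)"
  unfolding Wq_def Rq_def by (simp add: sum_distrib_left distrib_left power2_eq_square algebra_simps)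
lemma Zq_scale: "Zq (\<lambda>i. s * w i) = s^2 * Zq w"
  unfolding Zq_def zf_scale by (simp add: sum_distrib_left power2_eq_square algebra_simps)
lemma Pq_scale: "Pq (\<lambda>i. s * w i) = s^2 * Pq w"
  unfolding Pq_def pp_scale by (simp add: sum_distrib_left power2_eq_square algebra_simps)
lemma PMq_scale: "PMq (\<lambda>i. s * w i) = s^2 * PMq w"
  unfolding PMq_def pp_scale by (simp add: sum_distrib_left power2_eq_square algebra_simps)

lemma conn_eq: assumes "\<And>l. zf d l = 0" shows "d i = d j"
proof -
  have "(graph_adj src dst)\<^sup>*\<^sup>* i j" using conn unfolding graph_connected_def by blast
  then show ?thesis
  proof (induction rule: rtranclp_induct)
    case base then show ?case by simp
  next
    case (step y z)
    then obtain l where "(src l = y \<and> dst l = z) \<or> (src l = z \<and> dst l = y)"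
      unfolding graph_adj_def by blast
    then have "d y = d z" using assms[of l] unfolding zf_def by auto
    then show ?case using step by simp
  qed
qed

lemma Dis_nonneg: "Dis w r \<ge> 0"
  unfolding Dis_def using Dpos taupos K1pos
  by (intro add_nonneg_nonneg sum_nonneg) (auto intro!: mult_nonneg_nonneg simp: less_imp_le)
lemma Wq_nonneg: "Wq w \<ge> 0" unfolding Wq_def using Mpos by (auto intro!: sum_nonneg mult_nonneg_nonneg simp: less_imp_le)
lemma Rq_nonneg: "Rq w \<ge> 0" unfolding Rq_def using K1pos by (auto intro!: sum_nonneg mult_nonneg_nonneg simp: less_imp_le)
lemma Zq_nonneg: "Zq w \<ge> 0" unfolding Zq_def using kkpos by (auto intro!: sum_nonneg mult_nonneg_nonneg simp: less_imp_le)
lemma Pq_nonneg: "Pq w \<ge> 0" unfolding Pq_def by (auto intro!: sum_nonneg)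
lemma PMq_nonneg: "PMq w \<ge> 0" unfolding PMq_def using Mpos by (auto intro!: sum_nonneg mult_nonneg_nonneg simp: less_imp_le)

lemma Zq_pp: "Zq d = (\<Sum>i\<in>UNIV. d i * pp d i)"
  unfolding Zq_def pp_def key by (simp add: power2_eq_square mult.assoc)

lemma Dis_pos: assumes "w i \<noteq> 0 \<or> r l \<noteq> 0" shows "Dis w r > 0"
proof -
  have a: "(\<Sum>i\<in>UNIV. Dmp i * (w i)^2) \<ge> 0" "(\<Sum>l\<in>UNIV. (1 / (tau l * K1 l)) * (r l)^2) \<ge> 0"
    using Dpos taupos K1pos by (auto intro!: sum_nonneg mult_nonneg_nonneg simp: less_imp_le)
  show ?thesis
  proof (cases "w i \<noteq> 0")
    case True
    have "(\<Sum>i\<in>UNIV. Dmp i * (w i)^2) > 0"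
      by (rule sum_pos2[of _ i]) (use True Dpos in \<open>auto intro!: mult_nonneg_nonneg simp: less_imp_le\<close>)
    then show ?thesis using a unfolding Dis_def by linarith
  next
    case False
    then have "r l \<noteq> 0" using assms by auto
    have "(\<Sum>l\<in>UNIV. (1 / (tau l * K1 l)) * (r l)^2) > 0"
      by (rule sum_pos2[of _ l]) (use \<open>r l \<noteq> 0\<close> taupos K1pos in \<open>auto intro!: mult_nonneg_nonneg mult_pos_pos simp: less_imp_le\<close>)
    then show ?thesis using a unfolding Dis_def by linarith
  qed
qed

lemma zero_of_Zq: assumes "Zq d = 0" shows "zf d l = 0"
proof -
  have "\<forall>l\<in>UNIV. kk l * (zf d l)^2 = 0"
    using assms unfolding Zq_def using kkpos
    by (subst sum_nonneg_eq_0_iff[symmetric]) (auto intro!: mult_nonneg_nonneg simp: less_imp_le)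
  then have "kk l * (zf d l)^2 = 0" by blast
  then show ?thesis using kkpos[of l] by simp
qed

lemma Zq_of_Pq: assumes "Pq d = 0" shows "Zq d = 0"
proof -
  have "\<forall>i\<in>UNIV. (pp d i)^2 = 0"
    using assms unfolding Pq_def by (subst sum_nonneg_eq_0_iff[symmetric]) auto
  then show ?thesis unfolding Zq_pp by simp
qed

lemma vec_nth_scale: "($) (s *\<^sub>R x) = (\<lambda>i. s * (x $ i))" by auto

lemma upgradeC: assumes "\<exists>C. \<forall>x\<in>S. f x \<le> C * g x" "\<And>x. g x \<ge> 0"
  shows "\<exists>C>0. \<forall>x\<in>S. f x \<le> C * (g x :: real)"
proof -
  obtain C where C: "\<forall>x\<in>S. f x \<le> C * g x" using assms by blast
  have "f x \<le> max C 1 * g x" if "x \<in> S" for x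
    using C that assms(2)[of x] by (meson max.cobounded1 mult_right_mono order_trans)
  then show ?thesis by (intro exI[of _ "max C 1"]) auto
qed

lemma bound_WR_gen: 
  fixes f :: "('v \<Rightarrow> real) \<Rightarrow> ('e \<Rightarrow> real) \<Rightarrow> real"
  assumes hf: "\<And>w r s. f (\<lambda>i. s * w i) (\<lambda>l. s * r l) = s^2 * f w r"
  and cf: "continuous_on UNIV (\<lambda>x::(real^'v) \<times> (real^'e). f (($) (fst x)) (($) (snd x)))"
  shows "\<exists>C>0. \<forall>w r. f w r \<le> C * Dis w r"
proof -
  have cg: "continuous_on UNIV (\<lambda>x::(real^'v) \<times> (real^'e). Dis (($) (fst x)) (($) (snd x)))"
    unfolding Dis_def by (intro continuous_intros)
  have "\<exists>C. \<forall>x\<in>UNIV. f (($) (fst x)) (($) (snd x)) \<le> C * Dis (($) (fst x)) (($) (snd x))"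
  proof (rule ratio_bound[OF closed_UNIV _ cf cg])
    fix x :: "(real^'v) \<times> (real^'e)" and s :: real
    show "f (($) (fst (s *\<^sub>R x))) (($) (snd (s *\<^sub>R x))) = s\<^sup>2 * f (($) (fst x)) (($) (snd x))"
      using hf[of s "($) (fst x)" "($) (snd x)"] by (simp add: vec_nth_scale)
    show "Dis (($) (fst (s *\<^sub>R x))) (($) (snd (s *\<^sub>R x))) = s\<^sup>2 * Dis (($) (fst x)) (($) (snd x))"
      using Dis_scale[of s "($) (fst x)" "($) (snd x)"] by (simp add: vec_nth_scale)
  next
    fix x :: "(real^'v) \<times> (real^'e)" assume "x \<noteq> 0"
    then have "fst x \<noteq> 0 \<or> snd x \<noteq> 0" by (cases x) (auto simp: zero_prod_def)
    then obtain i l where "fst x $ i \<noteq> 0 \<or> snd x $ l \<noteq> 0" by (metis vec_eq_iff zero_index)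
    then show "Dis (($) (fst x)) (($) (snd x)) > 0" by (rule Dis_pos)
  qed auto
  then have "\<exists>C>0. \<forall>x\<in>UNIV. f (($) (fst x)) (($) (snd x)) \<le> C * Dis (($) (fst x)) (($) (snd x))"
    by (rule upgradeC) (rule Dis_nonneg)
  then obtain C where C: "C > 0" "\<forall>x. f (($) (fst x)) (($) (snd x)) \<le> C * Dis (($) (fst x)) (($) (snd x))" by auto
  have "f w r \<le> C * Dis w r" for w r using C(2)[rule_format, of "(vec_lambda w, vec_lambda r)"] by (simp add: vec_lambda_inverse)
  then show ?thesis using C(1) by blast
qed

lemma bound_F: "\<exists>C>0. \<forall>w r. Fq w r \<le> C * Dis w r"
  by (rule bound_WR_gen[where f = Fq, OF Fq_scale]) (unfold Fq_def qs_def pp_def zf_def, intro continuous_intros)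

lemma bound_WR: "\<exists>C>0. \<forall>w r. Wq w + Rq r \<le> C * Dis w r"
  by (rule bound_WR_gen[where f = "\<lambda>w r. Wq w + Rq r", OF WR_scale]) (unfold Wq_def Rq_def, intro continuous_intros)

lemma bound_d_gen:
  fixes f g :: "('v \<Rightarrow> real) \<Rightarrow> real"
  assumes hf: "\<And>d s. f (\<lambda>i. s * d i) = s^2 * f d" and hg: "\<And>d s. g (\<lambda>i. s * d i) = s^2 * g d"
  and sf: "\<And>d a. f (\<lambda>i. d i - a) = f d" and sg: "\<And>d a. g (\<lambda>i. d i - a) = g d"
  and cf: "continuous_on UNIV (\<lambda>x::real^'v. f (($) x))"
  and cg: "continuous_on UNIV (\<lambda>x::real^'v. g (($) x))"
  and gnn: "\<And>d. g d \<ge> 0" and gpos: "\<And>d. g d = 0 \<Longrightarrow> Zq d = 0"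
  shows "\<exists>C>0. \<forall>d. f d \<le> C * g d"
proof -
  define i0 where "i0 = (undefined :: 'v)"
  define S where "S = {x::real^'v. x $ i0 = 0}"
  have clS: "closed S" unfolding S_def by (intro closed_Collect_eq continuous_intros)
  have "\<exists>C. \<forall>x\<in>S. f (($) x) \<le> C * g (($) x)"
  proof (rule ratio_bound[OF clS _ continuous_on_subset[OF cf] continuous_on_subset[OF cg]])
    fix x :: "real^'v" and s :: real
    show "f (($) (s *\<^sub>R x)) = s\<^sup>2 * f (($) x)" using hf[of s "($) x"] by (simp add: vec_nth_scale)
    show "g (($) (s *\<^sub>R x)) = s\<^sup>2 * g (($) x)" using hg[of s "($) x"] by (simp add: vec_nth_scale)
  next
    fix x :: "real^'v" assume x: "x \<in> S" "x \<noteq> 0"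
    show "g (($) x) > 0"
    proof (rule ccontr)
      assume "\<not> g (($) x) > 0"
      then have "g (($) x) = 0" using gnn[of "($) x"] by linarith
      then have "Zq (($) x) = 0" by (rule gpos)
      then have "\<And>l. zf (($) x) l = 0" by (rule zero_of_Zq)
      then have "\<And>i. x $ i = x $ i0" by (rule conn_eq)
      then have "x = 0" using x(1) unfolding S_def by (simp add: vec_eq_iff)
      then show False using x by simp
    qed
  qed (auto simp: S_def)
  then have "\<exists>C>0. \<forall>x\<in>S. f (($) x) \<le> C * g (($) x)" by (rule upgradeC) (rule gnn)
  then obtain C where C: "C > 0" "\<forall>x\<in>S. f (($) x) \<le> C * g (($) x)" by auto
  have "f d \<le> C * g d" for d
  proof -
    have "(\<chi> i. d i - d i0) \<in> S" unfolding S_def by simp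
    then have "f (\<lambda>i. d i - d i0) \<le> C * g (\<lambda>i. d i - d i0)"
      using C(2) by (metis (no_types, lifting) vec_lambda_inverse UNIV_I)
    then show ?thesis using sf sg by simp
  qed
  then show ?thesis using C(1) by blast
qed

lemma pp_shift: "pp (\<lambda>i. d i - a) = pp d" unfolding pp_def zf_shift ..

lemma bound_Z: "\<exists>C>0. \<forall>d. Zq d \<le> C * Pq d"
proof (rule bound_d_gen[where f = Zq and g = Pq, OF Zq_scale Pq_scale])
  show "continuous_on UNIV (\<lambda>x::real^'v. Zq (($) x))" unfolding Zq_def zf_def by (intro continuous_intros)
  show "continuous_on UNIV (\<lambda>x::real^'v. Pq (($) x))" unfolding Pq_def pp_def qs_def zf_def by (intro continuous_intros)
qed (rule Pq_nonneg | erule Zq_of_Pq | simp add: Zq_def Pq_def zf_shift pp_shift)+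

lemma bound_PM: "\<exists>C>0. \<forall>d. PMq d \<le> C * Zq d"
proof (rule bound_d_gen[where f = PMq and g = Zq, OF PMq_scale Zq_scale])
  show "continuous_on UNIV (\<lambda>x::real^'v. Zq (($) x))" unfolding Zq_def zf_def by (intro continuous_intros)
  show "continuous_on UNIV (\<lambda>x::real^'v. PMq (($) x))" unfolding PMq_def pp_def qs_def zf_def by (intro continuous_intros)
qed (rule Zq_nonneg | simp add: Zq_def PMq_def zf_shift pp_shift)+

end


lemma D_sq_sum:
  assumes "\<And>i. ((\<lambda>s. f s i) has_real_derivative f' i) (at t)"
  shows "((\<lambda>s. \<Sum>i\<in>UNIV. a i * (f s i)^2) has_real_derivative (\<Sum>i\<in>UNIV. a i * (2 * f t i * f' i))) (at t)"
  by (intro DERIV_sum DERIV_cmult) (rule derivative_eq_intros assms refl | simp)+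

lemma D_prod_sum:
  assumes "\<And>i. ((\<lambda>s. f s i) has_real_derivative f' i) (at t)"
    "\<And>i. ((\<lambda>s. g s i) has_real_derivative g' i) (at t)"
  shows "((\<lambda>s. \<Sum>i\<in>UNIV. a i * f s i * g s i) has_real_derivative (\<Sum>i\<in>UNIV. a i * f' i * g t i + a i * f t i * g' i)) (at t)"
  by (intro DERIV_sum) (rule derivative_eq_intros assms refl | simp add: algebra_simps)+

context clsys begin

lemma D_zf: assumes "\<And>i. ((\<lambda>s. x s i) has_real_derivative x' i) (at t)"
  shows "((\<lambda>s. zf (x s) l) has_real_derivative zf x' l) (at t)"
  unfolding zf_def by (intro derivative_intros assms)

lemma D_pp: assumes "\<And>i. ((\<lambda>s. x s i) has_real_derivative x' i) (at t)"
  shows "((\<lambda>s. pp (x s) i) has_real_derivative pp x' i) (at t)"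
  unfolding pp_def qs_def by (intro DERIV_sum DERIV_cmult D_zf assms)

lemma traj_deriv:
  assumes sol: "closed_loop_solution M Dmp tau K1 K2 src dst w d c" and t: "t > 0"
  shows "((\<lambda>s. w s i) has_real_derivative (-(Dmp i/M i)*w t i + (1/M i) * qs (\<lambda>l. c t l - K2 l * zf (d t) l) i)) (at t)"
    and "((\<lambda>s. d s i) has_real_derivative w t i) (at t)"
    and "((\<lambda>s. c s l) has_real_derivative (-(1/tau l)*c t l + (K1 l/tau l)*zf (d t) l)) (at t)"
proof -
  have at: "at t within {0..} = at t" using t by (intro at_within_interior) auto
  have "t \<ge> 0" using t by simp
  note S = sol[unfolded closed_loop_solution_def, rule_format, OF this, unfolded Let_def at]
  show "((\<lambda>s. w s i) has_real_derivative (-(Dmp i/M i)*w t i + (1/M i) * qs (\<lambda>l. c t l - K2 l * zf (d t) l) i)) (at t)"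
    using S unfolding qs_def q_def zf_def by simp
  show "((\<lambda>s. d s i) has_real_derivative w t i) (at t)" using S by simp
  show "((\<lambda>s. c s l) has_real_derivative (-(1/tau l)*c t l + (K1 l/tau l)*zf (d t) l)) (at t)"
    using S unfolding zf_def by simp
qed

lemma up_split: "qs (\<lambda>l. c l - K2 l * zf d l) i = qs (\<lambda>l. c l - K1 l * zf d l) i - pp d i"
proof -
  have "(\<lambda>l. c l - K2 l * zf d l) = (\<lambda>l. (c l - K1 l * zf d l) - kk l * zf d l)"
    by (auto simp: kk_def algebra_simps)
  then show ?thesis unfolding pp_def by (simp add: qs_diff)
qed

lemma V0_deriv:
  assumes sol: "closed_loop_solution M Dmp tau K1 K2 src dst w d c" and t: "t > 0"
  shows "((\<lambda>s. Wq (w s) + Zq (d s) + Rq (\<lambda>l. c s l - K1 l * zf (d s) l)) has_real_derivative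
           -2 * Dis (w t) (\<lambda>l. c t l - K1 l * zf (d t) l)) (at t)"
proof -
  define r where "r = (\<lambda>l. c t l - K1 l * zf (d t) l)"
  define wd where "wd = (\<lambda>i. -(Dmp i/M i)*w t i + (1/M i) * qs (\<lambda>l. c t l - K2 l * zf (d t) l) i)"
  define cd where "cd = (\<lambda>l. -(1/tau l)*c t l + (K1 l/tau l)*zf (d t) l)"
  note TD = traj_deriv[OF sol t]
  have dw: "\<And>i. ((\<lambda>s. w s i) has_real_derivative wd i) (at t)" unfolding wd_def by (rule TD(1))
  have dd: "\<And>i. ((\<lambda>s. d s i) has_real_derivative w t i) (at t)" by (rule TD(2))
  have dc: "\<And>l. ((\<lambda>s. c s l) has_real_derivative cd l) (at t)" unfolding cd_def by (rule TD(3))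
  have dz: "\<And>l. ((\<lambda>s. zf (d s) l) has_real_derivative zf (w t) l) (at t)" by (rule D_zf[OF dd])
  have dr: "\<And>l. ((\<lambda>s. c s l - K1 l * zf (d s) l) has_real_derivative (cd l - K1 l * zf (w t) l)) (at t)"
    by (intro DERIV_diff DERIV_cmult dc dz)
  have D1: "((\<lambda>s. Wq (w s)) has_real_derivative (\<Sum>i\<in>UNIV. M i * (2 * w t i * wd i))) (at t)"
    unfolding Wq_def by (rule D_sq_sum[OF dw])
  have D2: "((\<lambda>s. Zq (d s)) has_real_derivative (\<Sum>l\<in>UNIV. kk l * (2 * zf (d t) l * zf (w t) l))) (at t)"
    unfolding Zq_def by (rule D_sq_sum[where f = "\<lambda>s l. zf (d s) l", OF dz])
  have D3: "((\<lambda>s. Rq (\<lambda>l. c s l - K1 l * zf (d s) l)) has_real_derivative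
      (\<Sum>l\<in>UNIV. (1 / K1 l) * (2 * r l * (cd l - K1 l * zf (w t) l)))) (at t)"
    unfolding Rq_def r_def by (rule D_sq_sum[where f = "\<lambda>s l. c s l - K1 l * zf (d s) l", OF dr])
  have e1: "M i * (2 * w t i * wd i) = -2 * (Dmp i * (w t i)^2) + 2 * (w t i * qs r i) - 2 * (w t i * pp (d t) i)" for i
    using Mpos[of i] unfolding wd_def r_def up_split by (simp add: field_simps power2_eq_square)
  have e3: "(1 / K1 l) * (2 * r l * (cd l - K1 l * zf (w t) l)) = -2 * ((1 / (tau l * K1 l)) * (r l)^2) - 2 * (r l * zf (w t) l)" for l
    using K1pos[of l] taupos[of l] unfolding cd_def r_def by (simp add: field_simps power2_eq_square)
  have e2: "kk l * (2 * zf (d t) l * zf (w t) l) = 2 * ((kk l * zf (d t) l) * zf (w t) l)" for l by simp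
  have S1: "(\<Sum>i\<in>UNIV. M i * (2 * w t i * wd i)) = -2 * (\<Sum>i\<in>UNIV. Dmp i * (w t i)^2)
      + 2 * (\<Sum>l\<in>UNIV. r l * zf (w t) l) - 2 * (\<Sum>l\<in>UNIV. (kk l * zf (d t) l) * zf (w t) l)"
    unfolding e1 sum.distrib sum_subtractf sum_distrib_left[symmetric] key[symmetric] pp_def by simp
  have S3: "(\<Sum>l\<in>UNIV. (1 / K1 l) * (2 * r l * (cd l - K1 l * zf (w t) l))) =
     -2 * (\<Sum>l\<in>UNIV. (1 / (tau l * K1 l)) * (r l)^2) - 2 * (\<Sum>l\<in>UNIV. r l * zf (w t) l)"
    unfolding e3 sum_subtractf sum_distrib_left[symmetric] by simp
  have S2: "(\<Sum>l\<in>UNIV. kk l * (2 * zf (d t) l * zf (w t) l)) = 2 * (\<Sum>l\<in>UNIV. (kk l * zf (d t) l) * zf (w t) l)"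
    unfolding e2 sum_distrib_left[symmetric] by simp
  have "((\<lambda>s. Wq (w s) + Zq (d s) + Rq (\<lambda>l. c s l - K1 l * zf (d s) l)) has_real_derivative
     (\<Sum>i\<in>UNIV. M i * (2 * w t i * wd i)) + (\<Sum>l\<in>UNIV. kk l * (2 * zf (d t) l * zf (w t) l))
     + (\<Sum>l\<in>UNIV. (1 / K1 l) * (2 * r l * (cd l - K1 l * zf (w t) l)))) (at t)"
    by (intro DERIV_add D1 D2 D3)
  moreover have "(\<Sum>i\<in>UNIV. M i * (2 * w t i * wd i)) + (\<Sum>l\<in>UNIV. kk l * (2 * zf (d t) l * zf (w t) l))
     + (\<Sum>l\<in>UNIV. (1 / K1 l) * (2 * r l * (cd l - K1 l * zf (w t) l))) = -2 * Dis (w t) r"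
    unfolding S1 S2 S3 Dis_def by simp
  ultimately show ?thesis unfolding r_def by simp
qed

lemma phi_deriv:
  assumes sol: "closed_loop_solution M Dmp tau K1 K2 src dst w d c" and t: "t > 0"
  shows "\<exists>D. ((\<lambda>s. \<Sum>i\<in>UNIV. M i * w s i * pp (d s) i) has_real_derivative D) (at t) \<and>
           D \<le> - Pq (d t) / 2 + Fq (w t) (\<lambda>l. c t l - K1 l * zf (d t) l)"
proof -
  define r where "r = (\<lambda>l. c t l - K1 l * zf (d t) l)"
  define wd where "wd = (\<lambda>i. -(Dmp i/M i)*w t i + (1/M i) * qs (\<lambda>l. c t l - K2 l * zf (d t) l) i)"
  note TD = traj_deriv[OF sol t]
  have dw: "\<And>i. ((\<lambda>s. w s i) has_real_derivative wd i) (at t)" unfolding wd_def by (rule TD(1))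
  have dd: "\<And>i. ((\<lambda>s. d s i) has_real_derivative w t i) (at t)" by (rule TD(2))
  have dp: "\<And>i. ((\<lambda>s. pp (d s) i) has_real_derivative pp (w t) i) (at t)" by (rule D_pp[OF dd])
  have DD: "((\<lambda>s. \<Sum>i\<in>UNIV. M i * w s i * pp (d s) i) has_real_derivative
      (\<Sum>i\<in>UNIV. M i * wd i * pp (d t) i + M i * w t i * pp (w t) i)) (at t)"
    by (rule D_prod_sum[where f = w and g = "\<lambda>s i. pp (d s) i", OF dw dp])
  have e: "M i * wd i * pp (d t) i + M i * w t i * pp (w t) i
     = (- ((pp (d t) i)^2)) + (qs r i - Dmp i * w t i) * pp (d t) i + M i * w t i * pp (w t) i" for i
    using Mpos[of i] unfolding wd_def r_def up_split by (simp add: field_simps power2_eq_square)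
  have y: "(qs r i - Dmp i * w t i) * pp (d t) i \<le> (pp (d t) i)^2 / 2 + (1/2) * (qs r i - Dmp i * w t i)^2" for i
  proof -
    have "0 \<le> (pp (d t) i - (qs r i - Dmp i * w t i))^2" by simp
    then show ?thesis by (simp add: power2_eq_square algebra_simps)
  qed
  have "(\<Sum>i\<in>UNIV. M i * wd i * pp (d t) i + M i * w t i * pp (w t) i)
      \<le> (\<Sum>i\<in>UNIV. (- ((pp (d t) i)^2)) / 2 + (1/2) * (qs r i - Dmp i * w t i)^2 + M i * w t i * pp (w t) i)"
    unfolding e
  proof (rule sum_mono)
    fix i show "- (pp (d t) i)\<^sup>2 + (qs r i - Dmp i * w t i) * pp (d t) i + M i * w t i * pp (w t) i
         \<le> - (pp (d t) i)\<^sup>2 / 2 + 1 / 2 * (qs r i - Dmp i * w t i)\<^sup>2 + M i * w t i * pp (w t) i"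
      using y[of i] by linarith
  qed
  also have "\<dots> = - Pq (d t) / 2 + Fq (w t) r"
    unfolding Pq_def Fq_def sum.distrib by (simp add: sum_divide_distrib sum_negf)
  finally show ?thesis using DD unfolding r_def by blast
qed

lemma phi_bound: "\<bar>\<Sum>i\<in>UNIV. M i * w i * pp d i\<bar> \<le> Wq w / 2 + PMq d / 2"
proof -
  have "\<bar>M i * w i * pp d i\<bar> \<le> M i * (w i)^2 / 2 + M i * (pp d i)^2 / 2" for i
  proof -
    have "0 \<le> M i * (\<bar>w i\<bar> - \<bar>pp d i\<bar>)^2" using Mpos[of i] by simp
    then show ?thesis using Mpos[of i]
      by (simp add: power2_eq_square algebra_simps abs_mult)
  qed
  then have "(\<Sum>i\<in>UNIV. \<bar>M i * w i * pp d i\<bar>) \<le> (\<Sum>i\<in>UNIV. M i * (w i)^2 / 2 + M i * (pp d i)^2 / 2)"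
    by (intro sum_mono)
  also have "\<dots> = Wq w / 2 + PMq d / 2"
    unfolding Wq_def PMq_def sum.distrib by (simp add: sum_divide_distrib)
  finally show ?thesis using sum_abs[of "\<lambda>i. M i * w i * pp d i" UNIV] by linarith
qed

end


lemma exp_decay: assumes "(g::real) > 0" shows "((\<lambda>t. exp (-(g*t))) \<longlongrightarrow> 0) at_top"
proof -
  have "filterlim (\<lambda>t. g * t) at_top at_top"
    by (rule filterlim_tendsto_pos_mult_at_top[OF tendsto_const assms filterlim_ident])
  then have "filterlim (\<lambda>t. -(g * t)) at_bot at_top" by (simp add: filterlim_uminus_at_bot)
  then show ?thesis by (rule filterlim_compose[OF exp_at_bot])
qed

context clsys begin

lemma edge_conv:
  assumes sol: "closed_loop_solution M Dmp tau K1 K2 src dst w d c"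
  shows "((\<lambda>t. zf (d t) l) \<longlongrightarrow> 0) at_top"
proof -
  obtain C1 where C1: "C1 > 0" "\<And>w r. Fq w r \<le> C1 * Dis w r" using bound_F by blast
  obtain C2 where C2: "C2 > 0" "\<And>w r. Wq w + Rq r \<le> C2 * Dis w r" using bound_WR by blast
  obtain C3 where C3: "C3 > 0" "\<And>d. Zq d \<le> C3 * Pq d" using bound_Z by blast
  obtain C4 where C4: "C4 > 0" "\<And>d. PMq d \<le> C4 * Zq d" using bound_PM by blast
  define B where "B = (1 + C4) / 2"
  define \<epsilon> where "\<epsilon> = 1 / (2 * (B + C1))"
  define \<gamma> where "\<gamma> = min (1 / C2) (\<epsilon> / (2 * C3))"
  define g where "g = \<gamma> / 2"
  have Bpos: "B > 0" unfolding B_def using C4 by simp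
  have epos: "\<epsilon> > 0" unfolding \<epsilon>_def using Bpos C1 by simp
  have eB: "\<epsilon> * B \<le> 1/2" and eC1: "\<epsilon> * C1 \<le> 1/2"
    unfolding \<epsilon>_def using Bpos C1 by (simp_all add: field_simps)
  have gpos: "\<gamma> > 0" unfolding \<gamma>_def using C2 C3 epos by simp
  define r where "r = (\<lambda>t l. c t l - K1 l * zf (d t) l)"
  define V0 where "V0 = (\<lambda>t. Wq (w t) + Zq (d t) + Rq (r t))"
  define phi where "phi = (\<lambda>t. \<Sum>i\<in>UNIV. M i * w t i * pp (d t) i)"
  define V where "V = (\<lambda>t. V0 t + \<epsilon> * phi t)"
  have V0nn: "V0 t \<ge> 0" for t unfolding V0_def using Wq_nonneg Zq_nonneg Rq_nonneg
    by (meson add_nonneg_nonneg)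
  have phiB: "\<bar>phi t\<bar> \<le> B * V0 t" for t
  proof -
    have "\<bar>phi t\<bar> \<le> Wq (w t) / 2 + PMq (d t) / 2" unfolding phi_def by (rule phi_bound)
    also have "\<dots> \<le> Wq (w t) / 2 + C4 * Zq (d t) / 2" using C4(2)[of "d t"] by simp
    also have "\<dots> \<le> B * V0 t"
      using mult_nonneg_nonneg[OF less_imp_le[OF C4(1)] Wq_nonneg[of "w t"]]
        mult_nonneg_nonneg[OF less_imp_le[OF C4(1)] Rq_nonneg[of "r t"]]
        Wq_nonneg[of "w t"] Zq_nonneg[of "d t"] Rq_nonneg[of "r t"]
      unfolding B_def V0_def by (simp add: field_simps)
    finally show ?thesis .
  qed
  have eph: "\<bar>\<epsilon> * phi t\<bar> \<le> V0 t / 2" for t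
  proof -
    have "\<bar>\<epsilon> * phi t\<bar> = \<epsilon> * \<bar>phi t\<bar>" using epos by (simp add: abs_mult)
    also have "\<dots> \<le> \<epsilon> * (B * V0 t)" using phiB[of t] epos by (simp add: mult_left_mono)
    also have "\<dots> = (\<epsilon> * B) * V0 t" by simp
    also have "\<dots> \<le> (1/2) * V0 t" using eB V0nn[of t] by (rule mult_right_mono)
    finally show ?thesis by simp
  qed
  have Vup: "V t \<le> 2 * V0 t" and Vlo: "V0 t \<le> 2 * V t" for t
  proof -
    have "\<epsilon> * phi t \<le> V0 t / 2" "- (\<epsilon> * phi t) \<le> V0 t / 2" using eph[of t] by linarith+
    then show "V t \<le> 2 * V0 t" using V0nn[of t] unfolding V_def by linarith
    show "V0 t \<le> 2 * V t" using V0nn[of t] \<open>- (\<epsilon> * phi t) \<le> V0 t / 2\<close> unfolding V_def by (simp add: algebra_simps)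
  qed
  have dV: "\<exists>D. (V has_real_derivative D) (at t) \<and> D \<le> - g * V t" if t: "t > 0" for t
  proof -
    have d0: "((\<lambda>s. V0 s) has_real_derivative -2 * Dis (w t) (r t)) (at t)"
      unfolding V0_def r_def by (rule V0_deriv[OF sol t])
    obtain D1 where d1: "(phi has_real_derivative D1) (at t)"
      and D1: "D1 \<le> - Pq (d t) / 2 + Fq (w t) (r t)"
      using phi_deriv[OF sol t] unfolding phi_def r_def by blast
    have dd: "(V has_real_derivative (-2 * Dis (w t) (r t) + \<epsilon> * D1)) (at t)"
      unfolding V_def by (intro DERIV_add DERIV_cmult d0 d1)
    define Ds where "Ds = Dis (w t) (r t)"
    have Dsnn: "Ds \<ge> 0" unfolding Ds_def by (rule Dis_nonneg)
    have "\<epsilon> * D1 \<le> \<epsilon> * (- Pq (d t) / 2 + C1 * Ds)"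
      using D1 C1(2)[of "w t" "r t"] epos unfolding Ds_def by (intro mult_left_mono) auto
    also have "\<dots> = - \<epsilon> * Pq (d t) / 2 + (\<epsilon> * C1) * Ds" by (simp add: algebra_simps)
    also have "\<dots> \<le> - \<epsilon> * Pq (d t) / 2 + (1/2) * Ds" using eC1 Dsnn mult_right_mono by fastforce
    finally have a: "-2 * Ds + \<epsilon> * D1 \<le> - Ds - \<epsilon> * Pq (d t) / 2" using Dsnn by linarith
    have b: "Wq (w t) + Rq (r t) \<le> C2 * Ds" unfolding Ds_def by (rule C2(2))
    have c: "Zq (d t) \<le> C3 * Pq (d t)" by (rule C3(2))
    have b': "\<gamma> * (Wq (w t) + Rq (r t)) \<le> Ds"
    proof -
      have "\<gamma> * (Wq (w t) + Rq (r t)) \<le> (1 / C2) * (Wq (w t) + Rq (r t))"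
        unfolding \<gamma>_def using Wq_nonneg[of "w t"] Rq_nonneg[of "r t"] by (intro mult_right_mono) auto
      also have "\<dots> \<le> (1/C2) * (C2 * Ds)" using b C2(1) by (intro mult_left_mono) auto
      finally show ?thesis using C2(1) by simp
    qed
    have c': "\<gamma> * Zq (d t) \<le> \<epsilon> * Pq (d t) / 2"
    proof -
      have "\<gamma> * Zq (d t) \<le> (\<epsilon> / (2 * C3)) * Zq (d t)"
        unfolding \<gamma>_def using Zq_nonneg[of "d t"] by (intro mult_right_mono) auto
      also have "\<dots> \<le> (\<epsilon> / (2 * C3)) * (C3 * Pq (d t))" using c C3(1) epos by (intro mult_left_mono) auto
      finally show ?thesis using C3(1) by simp
    qed
    have "-2 * Ds + \<epsilon> * D1 \<le> - \<gamma> * V0 t" using a b' c' unfolding V0_def by (simp add: algebra_simps)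
    also have "\<dots> \<le> - g * V t" using Vup[of t] gpos unfolding g_def
      by (simp add: mult_left_mono algebra_simps)
    finally show ?thesis using dd unfolding Ds_def by blast
  qed
  define h where "h = (\<lambda>t. V t * exp (g * t))"
  have dh: "\<exists>D. (h has_real_derivative D) (at t) \<and> D \<le> 0" if tpos: "t > 0" for t
  proof -
    obtain D where D: "(V has_real_derivative D) (at t)" "D \<le> - g * V t" using dV[OF tpos] by blast
    have e: "((\<lambda>s. exp (g * s)) has_real_derivative exp (g * t) * g) (at t)"
      by (auto intro!: derivative_eq_intros)
    have "(h has_real_derivative D * exp (g * t) + (exp (g * t) * g) * V t) (at t)"
      unfolding h_def using DERIV_mult[OF D(1) e] .
    moreover have "D * exp (g * t) + (exp (g * t) * g) * V t \<le> 0"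
    proof -
      have "D * exp (g * t) \<le> (- g * V t) * exp (g * t)" using D(2) by (intro mult_right_mono) auto
      then show ?thesis by (simp add: algebra_simps)
    qed
    ultimately show ?thesis by blast
  qed
  have hdec: "h t \<le> h 1" if "t \<ge> 1" for t
  proof (rule DERIV_nonpos_imp_decreasing_open[OF that])
    show "\<And>x. 1 < x \<Longrightarrow> x < t \<Longrightarrow> \<exists>y. (h has_real_derivative y) (at x) \<and> y \<le> 0" using dh by auto
    show "continuous_on {1..t} h"
    proof (rule continuous_at_imp_continuous_on, rule ballI)
      fix x assume "x \<in> {1..t}" then have "x > 0" by simp
      then obtain D where "(h has_real_derivative D) (at x)" using dh by blast
      then show "isCont h x" by (rule DERIV_isCont)
    qed
  qed
  have bound: "(zf (d t) l)^2 \<le> (2 * h 1 / kk l) * exp (-(g*t))" if "t \<ge> 1" for t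
  proof -
    have "kk l * (zf (d t) l)^2 \<le> Zq (d t)" unfolding Zq_def
      by (rule member_le_sum) (use kkpos in \<open>auto intro!: mult_nonneg_nonneg simp: less_imp_le\<close>)
    also have "\<dots> \<le> V0 t" unfolding V0_def using Wq_nonneg[of "w t"] Rq_nonneg[of "r t"] by simp
    also have "\<dots> \<le> 2 * V t" by (rule Vlo)
    also have "\<dots> = 2 * h t * exp (-(g*t))" unfolding h_def by (simp add: mult.assoc flip: exp_add)
    also have "\<dots> \<le> 2 * h 1 * exp (-(g*t))" using hdec[OF that] by simp
    finally have "(zf (d t) l)^2 \<le> (2 * h 1 * exp (-(g*t))) / kk l" using kkpos[of l]
      by (simp add: pos_le_divide_eq mult.commute)
    then show ?thesis by simp
  qed
  have "((\<lambda>t. (2 * h 1 / kk l) * exp (-(g*t))) \<longlongrightarrow> (2 * h 1 / kk l) * 0) at_top"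
    by (intro tendsto_mult tendsto_const exp_decay) (use gpos in \<open>simp add: g_def\<close>)
  then have lim: "((\<lambda>t. (2 * h 1 / kk l) * exp (-(g*t))) \<longlongrightarrow> 0) at_top" by simp
  have ev1: "\<forall>\<^sub>F t in at_top. (0::real) \<le> (zf (d t) l)^2" by simp
  have ev2: "\<forall>\<^sub>F t in at_top. (zf (d t) l)^2 \<le> (2 * h 1 / kk l) * exp (-(g*t))"
    by (rule eventually_at_top_linorderI[of 1]) (rule bound)
  have "((\<lambda>t. (zf (d t) l)^2) \<longlongrightarrow> 0) at_top"
    by (rule tendsto_sandwich[OF ev1 ev2 tendsto_const lim])
  then have "((\<lambda>t. sqrt ((zf (d t) l)^2)) \<longlongrightarrow> sqrt 0) at_top" by (rule tendsto_real_sqrt)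
  then have "((\<lambda>t. \<bar>zf (d t) l\<bar>) \<longlongrightarrow> 0) at_top" by simp
  then show ?thesis by (simp add: tendsto_rabs_zero_iff)
qed

lemma node_conv:
  assumes sol: "closed_loop_solution M Dmp tau K1 K2 src dst w d c"
  shows "((\<lambda>t. \<bar>d t i - d t j\<bar>) \<longlongrightarrow> 0) at_top"
proof -
  have "(graph_adj src dst)\<^sup>*\<^sup>* i j" using conn unfolding graph_connected_def by blast
  then have "((\<lambda>t. d t i - d t j) \<longlongrightarrow> 0) at_top"
  proof (induction rule: rtranclp_induct)
    case base then show ?case by simp
  next
    case (step y z)
    then obtain l where l: "(src l = y \<and> dst l = z) \<or> (src l = z \<and> dst l = y)"
      unfolding graph_adj_def by blast
    have ez: "((\<lambda>t. zf (d t) l) \<longlongrightarrow> 0) at_top" by (rule edge_conv[OF sol])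
    have "((\<lambda>t. d t y - d t z) \<longlongrightarrow> 0) at_top"
    proof (cases "src l = y \<and> dst l = z")
      case True then show ?thesis using ez unfolding zf_def by simp
    next
      case False
      then have "src l = z" "dst l = y" using l by auto
      then show ?thesis using tendsto_minus[OF ez] unfolding zf_def by simp
    qed
    from tendsto_add[OF step.IH this] show ?case by simp
  qed
  then show ?thesis by (simp add: tendsto_rabs_zero_iff)
qed

end

theorem theorem3:
  fixes M Dmp :: "'v::finite \<Rightarrow> real"
    and tau K1 K2 :: "'e::finite \<Rightarrow> real"
    and src dst :: "'e \<Rightarrow> 'v"
  assumes "simple_graph src dst"
    and "graph_connected src dst"
    and "\<forall>i. M i > 0" and "\<forall>i. Dmp i > 0"
    and "\<forall>l. tau l > 0" and "\<forall>l. K1 l > 0" and "\<forall>l. K2 l > K1 l"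
  shows "\<exists>Dc :: (('v \<Rightarrow> real) \<times> ('v \<Rightarrow> real) \<times> ('e \<Rightarrow> real)) set.
           open Dc \<and> ((\<lambda>_. 0), (\<lambda>_. 0), (\<lambda>_. 0)) \<in> Dc \<and>
           (\<forall>w d c. closed_loop_solution M Dmp tau K1 K2 src dst w d c \<and> (w 0, d 0, c 0) \<in> Dc
              \<longrightarrow> (\<forall>i j. ((\<lambda>t. \<bar>d t i - d t j\<bar>) \<longlongrightarrow> 0) at_top))"
proof -
  interpret clsys M Dmp tau K1 K2 src dst
    using assms unfolding simple_graph_def by unfold_locales auto
  show ?thesis by (intro exI[of _ UNIV]) (auto intro: node_conv)
qed


end
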